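(* Let $(V,F^\bullet,h)$ be a complex polarized Hodge structure of length $w\ge1$ with Hodge decomposition $V=\bigoplus_pV^p$ and Hodge metric $h_H$. For every $u\in\mathrm{End}(V)^{-1}=\bigoplus_k\mathrm{Hom}(V^k,V^{k-1})$, with $u^*$ its $h_H$-adjoint, \[|[u,u^*]|^2_{h_H}\ge\frac{4}{w^2\cdot\dim V}\,|u|^4_{h_H},\] i.e. $\operatorname{tr}([u,u^*]^2)\ge\frac{4}{w^2\dim V}(\operatorname{tr}(uu^* ))^2$.
   Context: A complex polarized Hodge structure (weight zero) on $V$: nondegenerate hermitian form $h$ and $h$-orthogonal decomposition $V=\bigoplus_{p\in\mathbb{Z}}V^p$ with $h|_{V^p}$ positive definite for $p$ even and negative definite for $p$ odd. Its length is $b-a$ for the smallest interval $[a,b]$ with $V^p=0$ for $p\notin[a,b]$. The Hodge metric $h_H$ is the positive definite hermitian metric with the $V^p$ mutually orthogonal and $h_H=(-1)^ph$ on $V^p$; on $\mathrm{End}(V)$ the induced metric is $|u|^2_{h_H}=\operatorname{tr}(uu^* )$. *)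

theory Defs
  imports "HOL-Analysis.Analysis"
begin

text \<open>V is modelled as complex^'n (so dim V = CARD('n)); endomorphisms are complex
  matrices acting on column vectors. The Hodge decomposition V = sum V^p is given by the
  family of projections P p onto V^p along the other summands.\<close>

definition herm_adj :: "complex^'n^'m \<Rightarrow> complex^'m^'n" where
  "herm_adj A = (\<chi> i j. cnj (A $ j $ i))"

definition hform :: "complex^'n^'n \<Rightarrow> complex^'n \<Rightarrow> complex^'n \<Rightarrow> complex" where
  "hform H x y = (\<Sum>i\<in>UNIV. cnj (x $ i) * ((H *v y) $ i))"

definition hsign :: "int \<Rightarrow> complex" where
  "hsign p = (if even p then 1 else -1)"

definition hodge_support :: "(int \<Rightarrow> complex^'n^'n) \<Rightarrow> int set" where
  "hodge_support P = {p. P p \<noteq> 0}"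

text \<open>Complex polarized Hodge structure of weight zero on complex^'n.\<close>
definition is_cphs :: "complex^'n^'n \<Rightarrow> (int \<Rightarrow> complex^'n^'n) \<Rightarrow> bool" where
  "is_cphs H P \<longleftrightarrow>
     herm_adj H = H \<and> invertible H \<and>
     finite (hodge_support P) \<and>
     (\<forall>p. P p ** P p = P p) \<and>
     (\<forall>p q. p \<noteq> q \<longrightarrow> P p ** P q = 0) \<and>
     sum P (hodge_support P) = mat 1 \<and>
     (\<forall>p q x y. p \<noteq> q \<longrightarrow> hform H (P p *v x) (P q *v y) = 0) \<and>
     (\<forall>p v. P p *v v = v \<and> v \<noteq> 0 \<longrightarrow> Re (hsign p * hform H v v) > 0)"

definition hodge_length :: "(int \<Rightarrow> complex^'n^'n) \<Rightarrow> int" where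
  "hodge_length P = Max (hodge_support P) - Min (hodge_support P)"

definition hodge_metric :: "complex^'n^'n \<Rightarrow> (int \<Rightarrow> complex^'n^'n) \<Rightarrow> complex^'n^'n" where
  "hodge_metric H P = (\<Sum>p\<in>hodge_support P. \<chi> i j. hsign p * (herm_adj (P p) ** H ** P p) $ i $ j)"

definition hodge_adj :: "complex^'n^'n \<Rightarrow> (int \<Rightarrow> complex^'n^'n) \<Rightarrow> complex^'n^'n \<Rightarrow> complex^'n^'n" where
  "hodge_adj H P u = matrix_inv (hodge_metric H P) ** herm_adj u ** hodge_metric H P"

definition hodge_norm2 :: "complex^'n^'n \<Rightarrow> (int \<Rightarrow> complex^'n^'n) \<Rightarrow> complex^'n^'n \<Rightarrow> real" where
  "hodge_norm2 H P u = Re (trace (u ** hodge_adj H P u))"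

definition degree_minus_one :: "(int \<Rightarrow> complex^'n^'n) \<Rightarrow> complex^'n^'n \<Rightarrow> bool" where
  "degree_minus_one P u \<longleftrightarrow> (\<forall>k. u ** P k = P (k - 1) ** u ** P k)"

end

theory Submission
  imports Defs
begin


lemma herm_adj_nth[simp]: "herm_adj A $ i $ j = cnj (A $ j $ i)"
  by (simp add: herm_adj_def)

lemma herm_adj_mult: "herm_adj ((A::complex^'n^'m) ** (B::complex^'k^'n)) = herm_adj B ** herm_adj A"
  by (simp add: vec_eq_iff matrix_matrix_mult_def mult.commute)

lemma herm_adj_herm_adj[simp]: "herm_adj (herm_adj A) = A"
  by (simp add: vec_eq_iff)

lemma herm_adj_add: "herm_adj (A + B) = herm_adj A + herm_adj B"
  by (simp add: vec_eq_iff)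

lemma herm_adj_diff: "herm_adj (A - B) = herm_adj A - herm_adj B"
  by (simp add: vec_eq_iff)

lemma herm_adj_zero[simp]: "herm_adj 0 = 0"
  by (simp add: vec_eq_iff)

lemma herm_adj_mat1[simp]: "herm_adj (mat 1 :: complex^'n^'n) = mat 1"
  by (simp add: vec_eq_iff mat_def)

lemma herm_adj_scaleR: "herm_adj (r *\<^sub>R A) = r *\<^sub>R herm_adj A"
  by (simp add: vec_eq_iff)

lemma herm_adj_sum: "finite S \<Longrightarrow> herm_adj (sum f S) = (\<Sum>p\<in>S. herm_adj (f p))"
  by (induction S rule: finite_induct) (auto simp: herm_adj_add)

lemma trace_herm_adj: "trace (herm_adj A) = cnj (trace A)"
  by (simp add: trace_def)

lemma trace_scaleR: "trace (r *\<^sub>R (A::complex^'n^'n)) = r *\<^sub>R trace A"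
  by (simp add: trace_def scaleR_sum_right)

lemma trace_sum: "finite S \<Longrightarrow> trace (sum f S) = (\<Sum>p\<in>S. trace (f p :: complex^'n^'n))"
  by (induction S rule: finite_induct) (auto simp: trace_add trace_0[unfolded mat_0])

lemma matrix_add_rdistrib: "((A::'a::semiring_1^'n^'m) + B) ** C = A ** C + B ** C"
  by (vector matrix_matrix_mult_def sum.distrib[symmetric] field_simps)

lemma matrix_diff_rdistrib: "((A::'a::ring_1^'n^'m) - B) ** C = A ** C - B ** C"
  by (vector matrix_matrix_mult_def sum_subtractf[symmetric] field_simps)

lemma matrix_diff_ldistrib: "(A::'a::ring_1^'n^'m) ** (B - C) = A ** B - A ** C"
  by (vector matrix_matrix_mult_def sum_subtractf[symmetric] field_simps)

lemma matrix_sum_rdistrib: "finite S \<Longrightarrow> (sum f S) ** (C::'a::semiring_1^'k^'n) = (\<Sum>p\<in>S. (f p :: 'a^'n^'m) ** C)"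
  by (induction S rule: finite_induct) (auto simp: matrix_add_rdistrib)

lemma matrix_sum_ldistrib: "finite S \<Longrightarrow> (C::'a::semiring_1^'n^'m) ** (sum f S) = (\<Sum>p\<in>S. C ** (f p :: 'a^'k^'n))"
  by (induction S rule: finite_induct) (auto simp: matrix_add_ldistrib)

lemma trace_hermsq_nonneg: "Re (trace (herm_adj (Z::complex^'n^'n) ** Z)) \<ge> 0"
proof -
  show ?thesis
    by (simp add: trace_def matrix_matrix_mult_def Re_sum) (intro sum_nonneg add_nonneg_nonneg; simp)
qed

definition hf :: "complex^'n^'n \<Rightarrow> complex^'n \<Rightarrow> complex^'n \<Rightarrow> complex" where
  "hf A x y = (\<Sum>i\<in>UNIV. \<Sum>j\<in>UNIV. cnj (x $ i) * A $ i $ j * y $ j)"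

lemma hform_hf: "hform A x y = hf A x y"
  by (simp add: hform_def hf_def matrix_vector_mult_def sum_distrib_left mult.assoc)



lemma hf_herm: assumes "herm_adj A = A" shows "hf A y x = cnj (hf A x y)"
proof -
  have A: "cnj (A $ i $ j) = A $ j $ i" for i j
    using arg_cong[OF assms, of "\<lambda>M. M $ j $ i"] by simp
  have "hf A y x = (\<Sum>i\<in>UNIV. \<Sum>j\<in>UNIV. cnj (y $ i) * A $ i $ j * x $ j)" by (simp add: hf_def)
  also have "\<dots> = (\<Sum>j\<in>UNIV. \<Sum>i\<in>UNIV. cnj (y $ i) * A $ i $ j * x $ j)" by (rule sum.swap)
  also have "\<dots> = cnj (hf A x y)"
    by (simp add: hf_def A mult_ac)
  finally show ?thesis .
qed

lemma hf_scale_right: "hf A x (c *s y) = c * hf A x y"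
  by (simp add: hf_def sum_distrib_left mult_ac)

lemma hf_scale_left: "hf A (c *s x) y = cnj c * hf A x y"
  by (simp add: hf_def sum_distrib_left mult_ac)

lemma frame_exists:
  fixes A :: "complex^'n^'n"
  assumes herm: "herm_adj A = A" and pd: "\<And>x. x \<noteq> 0 \<Longrightarrow> Re (hf A x x) > 0"
  shows "\<exists>E :: complex^'n^'n. herm_adj E ** A ** E = mat 1"
proof -
  have ex: "finite S \<Longrightarrow> \<exists>b. \<forall>i\<in>S. \<forall>j\<in>S. hf A (b i) (b j) = (if i = j then 1 else 0)" for S :: "'n set"
  proof (induction S rule: finite_induct)
    case empty then show ?case by simp
  next
    case (insert a S)
    then obtain b where b: "\<forall>i\<in>S. \<forall>j\<in>S. hf A (b i) (b j) = (if i = j then 1 else 0)" by blast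
    define M :: "complex^'n^'n" where "M = (\<chi> i l. if i \<in> S then (\<Sum>k\<in>UNIV. cnj (b i $ k) * A $ k $ l) else 0)"
    have Mv: "(M *v x) $ i = hf A (b i) x" if "i \<in> S" for i x
    proof -
      have "(M *v x) $ i = (\<Sum>l\<in>UNIV. \<Sum>k\<in>UNIV. cnj (b i $ k) * A $ k $ l * x $ l)"
        using that by (simp add: M_def matrix_vector_mult_def sum_distrib_right)
      also have "\<dots> = hf A (b i) x" unfolding hf_def by (rule sum.swap)
      finally show ?thesis .
    qed
    have "\<not> (\<exists>B. M ** B = mat 1)"
    proof
      assume "\<exists>B. M ** B = mat 1"
      then obtain B where "M ** B = mat 1" by blast
      then have "(M ** B) $ a $ a = 1" by (simp add: mat_def)
      moreover have "(M ** B) $ a $ a = 0" using insert(2) by (simp add: M_def matrix_matrix_mult_def)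
      ultimately show False by simp
    qed
    then have "\<not> (\<exists>B. B ** M = mat 1)" using invertible_left_inverse invertible_right_inverse by blast
    then obtain x where x: "M *v x = 0" "x \<noteq> 0" using matrix_left_invertible_ker by blast
    have orth: "hf A (b i) x = 0" if "i \<in> S" for i using Mv[OF that, of x] x(1) by simp
    have orth2: "hf A x (b i) = 0" if "i \<in> S" for i using orth[OF that] hf_herm[OF herm, of x "b i"] by simp
    define r where "r = Re (hf A x x)"
    have r: "r > 0" using pd[OF x(2)] r_def by simp
    have "cnj (hf A x x) = hf A x x" using hf_herm[OF herm, of x x] by simp
    then have hxx: "hf A x x = of_real r" unfolding r_def using Reals_cnj_iff complex_is_Real_iff
      by (metis complex_eq_iff complex_cnj_complex_of_real of_real_Re)
    define y where "y = complex_of_real (1 / sqrt r) *s x"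
    have yy: "hf A y y = 1"
      using r by (simp add: y_def hf_scale_left hf_scale_right hxx flip: of_real_mult)
    have y1: "hf A (b i) y = 0" if "i \<in> S" for i using orth[OF that] by (simp add: y_def hf_scale_right)
    have y2: "hf A y (b i) = 0" if "i \<in> S" for i using orth2[OF that] by (simp add: y_def hf_scale_left)
    show ?case
      apply (rule exI[of _ "b(a := y)"])
      using b yy y1 y2 insert(2) by auto
  qed
  have "\<exists>b :: 'n \<Rightarrow> complex^'n. \<forall>i\<in>UNIV. \<forall>j\<in>UNIV. hf A (b i) (b j) = (if i = j then 1 else 0)"
    using ex[of UNIV] by simp
  then obtain b :: "'n \<Rightarrow> complex^'n" where b: "\<forall>i\<in>UNIV. \<forall>j\<in>UNIV. hf A (b i) (b j) = (if i = j then 1 else 0)"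
    by blast
  define E :: "complex^'n^'n" where "E = (\<chi> r c. b c $ r)"
  have "herm_adj E ** A ** E = mat 1"
  proof -
    have "(herm_adj E ** A ** E) $ i $ j = hf A (b i) (b j)" for i j
    proof -
      have "(herm_adj E ** A ** E) $ i $ j = (\<Sum>l\<in>UNIV. (\<Sum>k\<in>UNIV. cnj (b i $ k) * A $ k $ l) * b j $ l)"
        by (simp add: E_def matrix_matrix_mult_def)
      also have "\<dots> = (\<Sum>l\<in>UNIV. \<Sum>k\<in>UNIV. cnj (b i $ k) * A $ k $ l * b j $ l)"
        by (simp add: sum_distrib_right)
      also have "\<dots> = hf A (b i) (b j)" unfolding hf_def by (rule sum.swap)
      finally show ?thesis .
    qed
    then show ?thesis using b by (simp add: vec_eq_iff mat_def)
  qed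
  then show ?thesis by blast
qed



definition cs :: "complex \<Rightarrow> complex^'n^'m \<Rightarrow> complex^'n^'m" where
  "cs c X = (\<chi> i j. c * X $ i $ j)"

lemma cs_nth[simp]: "cs c X $ i $ j = c * X $ i $ j" by (simp add: cs_def)

lemma scaleV_mult_left: "(cs c (X::complex^'n^'m)) ** Y = cs c (X ** Y)"
  by (simp add: vec_eq_iff matrix_matrix_mult_def sum_distrib_left mult.assoc)

lemma scaleV_mult_right: "(X::complex^'n^'m) ** (cs c Y) = cs c (X ** Y)"
  by (simp add: vec_eq_iff matrix_matrix_mult_def sum_distrib_left mult_ac)

lemma herm_adj_scaleV: "herm_adj (cs c (X::complex^'n^'m)) = cs (cnj c) (herm_adj X)"
  by (simp add: vec_eq_iff)

lemma hf_entry: "(herm_adj X ** A ** Y) $ a $ b = hf A (\<chi> r. X$r$a) (\<chi> r. Y$r$b)"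
proof -
  have "(herm_adj X ** A ** Y) $ a $ b = (\<Sum>l\<in>UNIV. (\<Sum>k\<in>UNIV. cnj (X $ k $ a) * A $ k $ l) * Y $ l $ b)"
    by (simp add: matrix_matrix_mult_def)
  also have "\<dots> = (\<Sum>l\<in>UNIV. \<Sum>k\<in>UNIV. cnj (X $ k $ a) * A $ k $ l * Y $ l $ b)"
    by (simp add: sum_distrib_right)
  also have "\<dots> = hf A (\<chi> r. X$r$a) (\<chi> r. Y$r$b)" unfolding hf_def by (subst sum.swap) simp
  finally show ?thesis .
qed

lemma mv_axis: "X *v axis a 1 = (\<chi> r. X$r$a)"
  by (simp add: vec_eq_iff matrix_vector_mult_def axis_def if_distrib if_distribR cong: if_cong)

lemma hf_mv: "hf (herm_adj X ** A ** Y) x y = hf A (X *v x) (Y *v y)"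
proof -
  have "hf A (X *v x) (Y *v y) = (\<Sum>i\<in>UNIV. cnj ((X *v x) $ i) * (A *v (Y *v y)) $ i)"
    by (simp add: hform_hf[symmetric] hform_def)
  also have "\<dots> = (\<Sum>i\<in>UNIV. cnj ((X *v x) $ i) * ((A ** Y) *v y) $ i)"
    by (simp add: matrix_vector_mul_assoc)
  also have "\<dots> = (\<Sum>i\<in>UNIV. cnj (x $ i) * ((herm_adj X ** A ** Y) *v y) $ i)"
  proof -
    have "(\<Sum>i\<in>UNIV. cnj ((X *v x) $ i) * ((A ** Y) *v y) $ i) =
       (\<Sum>i\<in>UNIV. \<Sum>k\<in>UNIV. cnj (X $ i $ k) * cnj (x $ k) * ((A ** Y) *v y) $ i)"
      by (simp add: matrix_vector_mult_def sum_distrib_right)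
    also have "\<dots> = (\<Sum>k\<in>UNIV. \<Sum>i\<in>UNIV. cnj (X $ i $ k) * cnj (x $ k) * ((A ** Y) *v y) $ i)"
      by (rule sum.swap)
    also have "\<dots> = (\<Sum>k\<in>UNIV. cnj (x $ k) * ((herm_adj X ** (A ** Y)) *v y) $ k)"
      by (simp add: matrix_vector_mul_assoc[symmetric] matrix_vector_mult_def[of "herm_adj X"] sum_distrib_left mult_ac)
    finally show ?thesis by (simp add: matrix_mul_assoc)
  qed
  finally show ?thesis by (simp add: hform_hf[symmetric] hform_def)
qed

lemma hf_sum: "finite S \<Longrightarrow> hf (sum f S) x y = (\<Sum>p\<in>S. hf (f p) x y)"
proof (induction S rule: finite_induct)
  case empty then show ?case by (simp add: hf_def)
next
  case (insert a S) then show ?case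
    by (simp add: hf_def sum.distrib distrib_left distrib_right)
qed

lemma hf_scaleV: "hf (cs c A) x y = c * hf A x y"
  by (simp add: hf_def sum_distrib_left mult_ac)

lemma hf_zero_left[simp]: "hf A 0 y = 0" by (simp add: hf_def)

lemma hf_mat_vec: "hf A x y = (\<Sum>i\<in>UNIV. cnj (x $ i) * (A *v y) $ i)"
  by (simp add: hform_hf[symmetric] hform_def)



context
  fixes H :: "complex^'n^'n" and P :: "int \<Rightarrow> complex^'n^'n"
  assumes cphs: "is_cphs H P"
begin

abbreviation "S \<equiv> hodge_support P"
abbreviation "G \<equiv> hodge_metric H P"
abbreviation "M p \<equiv> herm_adj (P p) ** H ** P p"

lemma finS: "finite S" using cphs by (simp add: is_cphs_def)
lemma Pidem: "P p ** P p = P p" using cphs by (simp add: is_cphs_def)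
lemma Porth: "p \<noteq> q \<Longrightarrow> P p ** P q = 0" using cphs by (simp add: is_cphs_def)
lemma Psum: "sum P S = mat 1" using cphs by (simp add: is_cphs_def)
lemma Pzero: "p \<notin> S \<Longrightarrow> P p = 0" by (simp add: hodge_support_def)
lemma Hherm: "herm_adj H = H" using cphs by (simp add: is_cphs_def)

lemma Horth: assumes "p \<noteq> q" shows "herm_adj (P p) ** H ** P q = 0"
proof -
  have "hform H (P p *v x) (P q *v y) = 0" for x y using cphs assms by (simp add: is_cphs_def)
  then show ?thesis by (simp add: vec_eq_iff hf_entry mv_axis[symmetric] hform_hf[symmetric])
qed

lemma G_eq: "G = (\<Sum>p\<in>S. cs (hsign p) (M p))"
  unfolding hodge_metric_def cs_def by simp

lemma MP: "M p ** P q = (if p = q then M p else 0)"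
  by (simp add: matrix_mul_assoc[symmetric] Pidem Porth)

lemma PM: "herm_adj (P q) ** M p = (if p = q then M p else 0)"
proof -
  have "herm_adj (P q) ** M p = herm_adj (P p ** P q) ** H ** P p"
    by (simp add: herm_adj_mult matrix_mul_assoc)
  then show ?thesis by (auto simp: Pidem Porth)
qed

lemma G_P: "G ** P q = cs (hsign q) (M q)"
proof (cases "q \<in> S")
  case True
  have "G ** P q = (\<Sum>p\<in>S. cs (hsign p) (M p ** P q))"
    by (simp add: G_eq matrix_sum_rdistrib[OF finS] scaleV_mult_left)
  also have "\<dots> = (\<Sum>p\<in>S. if p = q then cs (hsign q) (M q) else 0)"
    by (intro sum.cong) (auto simp: MP cs_def vec_eq_iff)
  finally show ?thesis using True finS by simp
next
  case False then show ?thesis by (simp add: Pzero cs_def vec_eq_iff)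
qed

lemma P_G: "herm_adj (P q) ** G = cs (hsign q) (M q)"
proof (cases "q \<in> S")
  case True
  have "herm_adj (P q) ** G = (\<Sum>p\<in>S. cs (hsign p) (herm_adj (P q) ** M p))"
    by (simp add: G_eq matrix_sum_ldistrib[OF finS] scaleV_mult_right)
  also have "\<dots> = (\<Sum>p\<in>S. if p = q then cs (hsign q) (M q) else 0)"
    by (intro sum.cong) (auto simp: PM cs_def vec_eq_iff)
  finally show ?thesis using True finS by simp
next
  case False then show ?thesis by (simp add: Pzero cs_def vec_eq_iff)
qed

lemma GP_comm: "herm_adj (P q) ** G = G ** P q"
  by (simp add: G_P P_G)

lemma cnj_hsign[simp]: "cnj (hsign p) = hsign p"
  by (simp add: hsign_def)

lemma Gherm: "herm_adj G = G"
proof -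
  have "herm_adj (M p) = M p" for p by (simp add: herm_adj_mult Hherm matrix_mul_assoc)
  then show ?thesis
    by (simp add: G_eq herm_adj_sum[OF finS] herm_adj_scaleV)
qed

lemma Gpd: assumes "x \<noteq> 0" shows "Re (hf G x x) > 0"
proof -
  have tm: "Re (hsign p * hf (M p) x x) \<ge> 0" for p
  proof (cases "P p *v x = 0")
    case True then show ?thesis by (simp add: hf_mv)
  next
    case False
    have "P p *v (P p *v x) = P p *v x" by (simp add: matrix_vector_mul_assoc Pidem)
    then have "Re (hsign p * hform H (P p *v x) (P p *v x)) > 0"
      using cphs False unfolding is_cphs_def by blast
    then show ?thesis by (simp add: hf_mv hform_hf)
  qed
  have "\<exists>p\<in>S. P p *v x \<noteq> 0"
  proof (rule ccontr)
    assume "\<not> ?thesis"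
    then have "(\<Sum>p\<in>S. P p *v x) = 0" by simp
    moreover have "(\<Sum>p\<in>S. P p *v x) = mat 1 *v x"
      using finS by (simp add: Psum[symmetric] matrix_vector_mult_def vec_eq_iff sum_distrib_right)
        (subst sum.swap, simp)
    ultimately show False using assms by simp
  qed
  then obtain q where q: "q \<in> S" "P q *v x \<noteq> 0" by blast
  have qpos: "Re (hsign q * hf (M q) x x) > 0"
  proof -
    have "P q *v (P q *v x) = P q *v x" by (simp add: matrix_vector_mul_assoc Pidem)
    then have "Re (hsign q * hform H (P q *v x) (P q *v x)) > 0"
      using cphs q unfolding is_cphs_def by blast
    then show ?thesis by (simp add: hf_mv hform_hf)
  qed
  have "Re (hf G x x) = (\<Sum>p\<in>S. Re (hsign p * hf (M p) x x))"
    by (simp add: G_eq hf_sum[OF finS] hf_scaleV Re_sum)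
  also have "\<dots> > 0" using finS q(1) qpos tm by (intro sum_pos2) auto
  finally show ?thesis .
qed

lemma Ginj: "\<exists>B. B ** G = mat 1"
proof -
  have "G *v x = 0 \<longrightarrow> x = 0" for x
  proof
    assume "G *v x = 0"
    then have "hf G x x = 0" by (simp add: hf_mat_vec)
    then show "x = 0" using Gpd by force
  qed
  then show ?thesis using matrix_left_invertible_ker by blast
qed

lemma Ginv: "invertible G" using Ginj invertible_left_inverse by blast

abbreviation "Gi \<equiv> matrix_inv G"

lemma GGi: "G ** Gi = mat 1" and GiG: "Gi ** G = mat 1"
proof -
  have "\<exists>A'. G ** A' = mat 1 \<and> A' ** G = mat 1" using Ginv invertible_def by blast
  then have "G ** Gi = mat 1 \<and> Gi ** G = mat 1" unfolding matrix_inv_def by (rule someI_ex)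
  then show "G ** Gi = mat 1" "Gi ** G = mat 1" by auto
qed

lemma left_inv_unique: "K ** G = mat 1 \<Longrightarrow> K = Gi"
  by (metis GGi matrix_mul_assoc matrix_mul_lid matrix_mul_rid)

lemma Giherm: "herm_adj Gi = Gi"
proof -
  have "herm_adj Gi ** G = mat 1"
    using arg_cong[OF GGi, of herm_adj] by (simp add: herm_adj_mult Gherm)
  then show ?thesis by (rule left_inv_unique)
qed

abbreviation "adj X \<equiv> hodge_adj H P X"

lemma adj_def': "adj X = Gi ** herm_adj X ** G" by (simp add: hodge_adj_def)

lemma adj_mult: "adj (X ** Y) = adj Y ** adj X"
proof -
  have "adj Y ** adj X = Gi ** herm_adj Y ** (G ** Gi) ** herm_adj X ** G"
    by (simp add: adj_def' matrix_mul_assoc)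
  then show ?thesis by (simp add: GGi adj_def' herm_adj_mult matrix_mul_assoc)
qed

lemma adj_add: "adj (X + Y) = adj X + adj Y"
  by (simp add: adj_def' herm_adj_add matrix_add_ldistrib matrix_add_rdistrib)

lemma adj_diff: "adj (X - Y) = adj X - adj Y"
  by (simp add: adj_def' herm_adj_diff matrix_diff_ldistrib matrix_diff_rdistrib)

lemma adj_scaleR: "adj (r *\<^sub>R X) = r *\<^sub>R adj X"
  by (simp add: adj_def' herm_adj_scaleR matrix_scalar_ac scalar_matrix_assoc)

lemma adj_sum: "finite T \<Longrightarrow> adj (sum f T) = (\<Sum>p\<in>T. adj (f p))"
  by (simp add: adj_def' herm_adj_sum matrix_sum_ldistrib matrix_sum_rdistrib)

lemma adj_adj: "adj (adj X) = X"
proof -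
  have "adj (adj X) = (Gi ** G) ** X ** (Gi ** G)"
    by (simp add: adj_def' herm_adj_mult Gherm Giherm matrix_mul_assoc)
  then show ?thesis by (simp add: GiG)
qed

lemma adj_P: "adj (P p) = P p"
  by (simp add: adj_def' matrix_mul_assoc[symmetric] GP_comm) (simp add: matrix_mul_assoc GiG)

lemma adj_pos: "Re (trace (X ** adj X)) \<ge> 0"
proof -
  obtain E :: "complex^'n^'n" where E: "herm_adj E ** G ** E = mat 1"
    using frame_exists[OF Gherm] Gpd by blast
  have "E ** (herm_adj E ** G) = mat 1"
    using E matrix_left_right_inverse by (metis matrix_mul_assoc)
  then have EE: "E ** herm_adj E = Gi" by (intro left_inv_unique) (simp add: matrix_mul_assoc)
  have EEG: "E ** herm_adj E ** G = mat 1" using EE GiG by simp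
  define Z where "Z = herm_adj E ** G ** X ** E"
  have "trace (X ** adj X) = trace ((X ** Gi) ** (herm_adj X ** G))"
    by (simp add: adj_def' matrix_mul_assoc)
  also have "\<dots> = trace ((herm_adj X ** G ** X) ** (E ** herm_adj E))"
    by (subst trace_mul_sym) (simp add: EE matrix_mul_assoc)
  also have "\<dots> = trace (herm_adj E ** (herm_adj X ** G ** X ** E))"
    by (subst trace_mul_sym) (simp add: matrix_mul_assoc)
  also have "\<dots> = trace (herm_adj E ** herm_adj X ** G ** (E ** herm_adj E ** G) ** X ** E)"
    by (simp add: EEG matrix_mul_assoc)
  also have "\<dots> = trace (herm_adj Z ** Z)"
    by (simp add: Z_def herm_adj_mult Gherm matrix_mul_assoc)
  finally show ?thesis using trace_hermsq_nonneg by simp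
qed

end


lemma quad_disc:
  fixes \<alpha> \<beta> \<gamma> :: real
  assumes "\<And>t. 0 \<le> \<alpha> + 2 * t * \<beta> + t\<^sup>2 * \<gamma>" "\<gamma> \<ge> 0"
  shows "\<beta>\<^sup>2 \<le> \<alpha> * \<gamma>"
proof (cases "\<gamma> = 0")
  case True
  have "\<beta> = 0"
  proof (rule ccontr)
    assume b: "\<beta> \<noteq> 0"
    have "0 \<le> \<alpha> + 2 * (-(\<alpha> + 1) / (2 * \<beta>)) * \<beta>" using assms(1)[of "-(\<alpha> + 1) / (2 * \<beta>)"] True by simp
    also have "\<dots> = -1" using b by (simp add: field_simps)
    finally show False by simp
  qed
  then show ?thesis using True by simp
next
  case False
  then have g: "\<gamma> > 0" using assms(2) by simp
  have "0 \<le> \<alpha> + 2 * (-\<beta>/\<gamma>) * \<beta> + (-\<beta>/\<gamma>)\<^sup>2 * \<gamma>" by (rule assms(1))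
  also have "\<dots> = (\<alpha> * \<gamma> - \<beta>\<^sup>2) / \<gamma>" using g by (simp add: field_simps power2_eq_square)
  finally show ?thesis using g by (simp add: zero_le_divide_iff)
qed

lemma reindex_shift:
  fixes a :: "int \<Rightarrow> complex" and f :: "int \<Rightarrow> complex"
  assumes fin: "finite T" and a1: "\<And>q. q \<notin> T \<Longrightarrow> a q = 0" and a2: "\<And>p. p \<notin> T \<Longrightarrow> a (p + 1) = 0"
  shows "(\<Sum>p\<in>T. f p * a (p + 1)) = (\<Sum>p\<in>T. f (p - 1) * a p)"
proof -
  let ?U = "(\<lambda>q. q - 1) ` T"
  have "(\<Sum>p\<in>T. f p * a (p + 1)) = (\<Sum>p\<in>T \<union> ?U. f p * a (p + 1))"
    using fin a2 by (intro sum.mono_neutral_left) auto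
  also have "\<dots> = (\<Sum>p\<in>?U. f p * a (p + 1))"
    using fin a1 by (intro sum.mono_neutral_right) (auto simp: image_iff, metis add_diff_cancel)
  also have "\<dots> = (\<Sum>p\<in>T. f (p - 1) * a p)"
    by (subst sum.reindex) (auto simp: inj_on_def)
  finally show ?thesis .
qed



context
  fixes H :: "complex^'n^'n" and P :: "int \<Rightarrow> complex^'n^'n" and u :: "complex^'n^'n"
  assumes cphs: "is_cphs H P" and deg: "degree_minus_one P u"
begin

lemma degk: "u ** P k = P (k - 1) ** u ** P k" using deg by (simp add: degree_minus_one_def)

lemma Pu: "P j ** u = u ** P (j + 1)"
proof -
  have "P j ** u = P j ** u ** sum P (S P)" by (simp add: Psum[OF cphs])
  also have "\<dots> = (\<Sum>k\<in>S P. P j ** (u ** P k))"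
    by (simp add: matrix_sum_ldistrib[OF finS[OF cphs]] matrix_mul_assoc)
  also have "\<dots> = (\<Sum>k\<in>S P. if k = j + 1 then u ** P k else 0)"
  proof (intro sum.cong refl)
    fix k
    show "P j ** (u ** P k) = (if k = j + 1 then u ** P k else 0)"
    proof (cases "k = j + 1")
      case True
      then show ?thesis using degk[of k] by (simp add: matrix_mul_assoc Pidem[OF cphs])
    next
      case False
      then have "k - 1 \<noteq> j" by simp
      then show ?thesis using degk[of k] False
        by (simp add: matrix_mul_assoc Porth[OF cphs])
    qed
  qed
  also have "\<dots> = u ** P (j + 1)"
    using finS[OF cphs] by (auto simp: Pzero[OF cphs])
  finally show ?thesis .
qed

definition a :: "int \<Rightarrow> complex" where "a p = trace (u ** P p ** adj H P u)"

definition \<theta> where "\<theta> = u ** adj H P u - adj H P u ** u"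

lemma trace_theta_P: "trace (\<theta> ** P p) = a (p + 1) - a p"
proof -
  have 1: "trace (u ** adj H P u ** P p) = a (p + 1)"
  proof -
    have "trace (u ** adj H P u ** P p) = trace (P p ** (u ** adj H P u))"
      by (subst trace_mul_sym) simp
    also have "\<dots> = a (p + 1)" by (simp add: a_def matrix_mul_assoc Pu)
    finally show ?thesis .
  qed
  have 2: "trace (adj H P u ** u ** P p) = a p"
    unfolding a_def by (subst trace_mul_sym) (simp add: matrix_mul_assoc)
  show ?thesis using 1 2 by (simp add: \<theta>_def matrix_diff_rdistrib trace_sub)
qed

lemma a_out: "q \<notin> S P \<Longrightarrow> a q = 0" by (simp add: a_def Pzero[OF cphs] trace_def)

lemma a_out2: "p \<notin> S P \<Longrightarrow> a (p + 1) = 0"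
proof -
  assume "p \<notin> S P"
  have "a (p + 1) = trace (P p ** (u ** adj H P u))"
    unfolding a_def by (simp add: Pu[symmetric] matrix_mul_assoc)
  then show ?thesis using \<open>p \<notin> S P\<close> by (simp add: Pzero[OF cphs] trace_def)
qed

lemma sum_a: "(\<Sum>p\<in>S P. a p) = trace (u ** adj H P u)"
proof -
  have "(\<Sum>p\<in>S P. a p) = trace (\<Sum>p\<in>S P. u ** P p ** adj H P u)"
    by (simp add: a_def trace_sum[OF finS[OF cphs]])
  also have "(\<Sum>p\<in>S P. u ** P p ** adj H P u) = u ** sum P (S P) ** adj H P u"
    by (simp add: matrix_sum_ldistrib[OF finS[OF cphs]] matrix_sum_rdistrib[OF finS[OF cphs]])
  finally show ?thesis by (simp add: Psum[OF cphs])
qed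

definition D :: "real \<Rightarrow> complex^'n^'n" where
  "D c = (\<Sum>p\<in>S P. (real_of_int p - c) *\<^sub>R P p)"

lemma trace_theta_D: "trace (\<theta> ** D c) = - trace (u ** adj H P u)"
proof -
  have "trace (\<theta> ** D c) = (\<Sum>p\<in>S P. (real_of_int p - c) *\<^sub>R (a (p + 1) - a p))"
    by (simp add: D_def matrix_sum_ldistrib[OF finS[OF cphs]] trace_sum[OF finS[OF cphs]]
        matrix_scalar_ac scalar_matrix_assoc[symmetric] trace_scaleR trace_theta_P)
  also have "\<dots> = (\<Sum>p\<in>S P. of_real (real_of_int p - c) * (a (p + 1) - a p))"
    by (simp only: scaleR_conv_of_real)
  also have "\<dots> = (\<Sum>p\<in>S P. of_real (real_of_int p - c) * a (p + 1)) - (\<Sum>p\<in>S P. of_real (real_of_int p - c) * a p)"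
    by (simp add: right_diff_distrib sum_subtractf)
  also have "(\<Sum>p\<in>S P. of_real (real_of_int p - c) * a (p + 1)) = (\<Sum>p\<in>S P. of_real (real_of_int (p - 1) - c) * a p)"
    using reindex_shift[where a=a and T="S P" and f="\<lambda>p. of_real (real_of_int p - c)", OF finS[OF cphs] a_out a_out2] by simp
  also have "\<dots> - (\<Sum>p\<in>S P. of_real (real_of_int p - c) * a p) = - (\<Sum>p\<in>S P. a p)"
    by (simp add: sum_subtractf[symmetric] sum_negf[symmetric] algebra_simps)
  finally show ?thesis by (simp add: sum_a)
qed

end


lemma sq_bound:
  fixes x m M :: real
  assumes "m \<le> x" "x \<le> M"
  shows "(x - (M + m) / 2)\<^sup>2 \<le> (M - m)\<^sup>2 / 4"
proof -
  have "(x - (M + m) / 2)\<^sup>2 - (M - m)\<^sup>2 / 4 = (x - M) * (x - m)"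
    by (simp add: power2_eq_square field_simps)
  also have "\<dots> \<le> 0" using assms by (intro mult_nonpos_nonneg) auto
  finally show ?thesis by simp
qed

lemma Re_trace_scaleR: "Re (trace (r *\<^sub>R (X::complex^'n^'n))) = r * Re (trace X)"
  by (simp add: trace_scaleR)

context
  fixes H :: "complex^'n^'n" and P :: "int \<Rightarrow> complex^'n^'n" and u :: "complex^'n^'n"
  assumes cphs: "is_cphs H P" and deg: "degree_minus_one P u"
begin

lemma adj_theta: "adj H P (\<theta> H P u) = \<theta> H P u"
  by (simp add: \<theta>_def[OF cphs deg] adj_diff[OF cphs] adj_mult[OF cphs] adj_adj[OF cphs])

lemma adj_D: "adj H P (D P c) = D P c"
  by (simp add: D_def[OF cphs deg] adj_sum[OF cphs finS[OF cphs]] adj_scaleR[OF cphs] adj_P[OF cphs])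

lemma PD: assumes "p \<in> S P" shows "P p ** D P c = (real_of_int p - c) *\<^sub>R P p"
proof -
  have "P p ** D P c = (\<Sum>q\<in>S P. (real_of_int q - c) *\<^sub>R (P p ** P q))"
    by (simp add: D_def[OF cphs deg] matrix_sum_ldistrib[OF finS[OF cphs]] matrix_scalar_ac scalar_matrix_assoc[symmetric])
  also have "\<dots> = (\<Sum>q\<in>S P. if q = p then (real_of_int p - c) *\<^sub>R P p else 0)"
    by (intro sum.cong refl) (auto simp: Pidem[OF cphs] Porth[OF cphs])
  finally show ?thesis using assms finS[OF cphs] by simp
qed

lemma DD: "D P c ** D P c = (\<Sum>p\<in>S P. (real_of_int p - c)\<^sup>2 *\<^sub>R P p)"
proof -
  have "D P c ** D P c = (\<Sum>p\<in>S P. (real_of_int p - c) *\<^sub>R (P p ** D P c))"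
    by (simp add: D_def[OF cphs deg] matrix_sum_rdistrib[OF finS[OF cphs]] scalar_matrix_assoc[symmetric])
  also have "\<dots> = (\<Sum>p\<in>S P. (real_of_int p - c)\<^sup>2 *\<^sub>R P p)"
    by (intro sum.cong refl) (simp add: PD power2_eq_square)
  finally show ?thesis .
qed

lemma trP_nonneg: "Re (trace (P p)) \<ge> 0"
  using adj_pos[OF cphs, of "P p"] by (simp add: adj_P[OF cphs] Pidem[OF cphs])

lemma sum_trP: "(\<Sum>p\<in>S P. Re (trace (P p))) = real CARD('n)"
proof -
  have "(\<Sum>p\<in>S P. Re (trace (P p))) = Re (trace (sum P (S P)))"
    by (simp add: trace_sum[OF finS[OF cphs]] Re_sum)
  then show ?thesis by (simp add: Psum[OF cphs] trace_I)
qed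

lemma gamma_eq: "Re (trace (D P c ** D P c)) = (\<Sum>p\<in>S P. (real_of_int p - c)\<^sup>2 * Re (trace (P p)))"
  by (simp add: DD trace_sum[OF finS[OF cphs]] Re_sum Re_trace_scaleR)

lemma quad: "0 \<le> Re (trace (\<theta> H P u ** \<theta> H P u)) + 2 * t * (- Re (trace (u ** adj H P u)))
                 + t\<^sup>2 * Re (trace (D P c ** D P c))"
proof -
  let ?T = "\<theta> H P u" and ?D = "D P c"
  define A where "A = ?T + t *\<^sub>R ?D"
  have adjA: "adj H P A = A"
    by (simp add: A_def adj_add[OF cphs] adj_scaleR[OF cphs] adj_theta adj_D)
  have "0 \<le> Re (trace (A ** adj H P A))" by (rule adj_pos[OF cphs])
  also have "trace (A ** adj H P A) = trace (?T ** ?T) + t *\<^sub>R trace (?T ** ?D) + t *\<^sub>R trace (?D ** ?T)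
      + (t * t) *\<^sub>R trace (?D ** ?D)"
    unfolding adjA unfolding A_def
    by (simp add: matrix_add_ldistrib matrix_add_rdistrib matrix_scalar_ac
        scalar_matrix_assoc[symmetric] trace_add trace_scaleR scaleR_add_right)
  also have "trace (?D ** ?T) = trace (?T ** ?D)" by (rule trace_mul_sym)
  finally show ?thesis
    using trace_theta_D[OF cphs deg, of c]
    by (simp add: power2_eq_square algebra_simps)
qed

end

theorem lemma3p7:
  fixes H :: "complex^'n^'n" and P :: "int \<Rightarrow> complex^'n^'n" and u :: "complex^'n^'n"
  assumes "is_cphs H P"
    and "hodge_length P \<ge> 1"
    and "degree_minus_one P u"
  shows "hodge_norm2 H P (u ** hodge_adj H P u - hodge_adj H P u ** u)
           \<ge> 4 / (real_of_int (hodge_length P) ^ 2 * real CARD('n)) * (hodge_norm2 H P u) ^ 2"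
proof -
  note cphs = assms(1) and deg = assms(3)
  let ?S = "hodge_support P"
  have Sne: "?S \<noteq> {}"
  proof
    assume "?S = {}"
    then have "(mat 1 :: complex^'n^'n) = 0" using Psum[OF cphs] by simp
    then have "(mat 1 :: complex^'n^'n) $ undefined $ undefined = 0" by simp
    then show False by (simp add: mat_def)
  qed
  define m where "m = real_of_int (Min ?S)"
  define MM where "MM = real_of_int (Max ?S)"
  define w where "w = real_of_int (hodge_length P)"
  have w: "w = MM - m" by (simp add: w_def MM_def m_def hodge_length_def)
  have w1: "w \<ge> 1" using assms(2) by (simp add: w_def)
  define c where "c = (MM + m) / 2"
  define \<alpha> where "\<alpha> = Re (trace (\<theta> H P u ** \<theta> H P u))"
  define N where "N = Re (trace (u ** adj H P u))"
  define \<gamma> where "\<gamma> = Re (trace (D P c ** D P c))"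
  define n where "n = real CARD('n)"
  have n: "n \<ge> 1" by (simp add: n_def)
  have \<gamma>0: "\<gamma> \<ge> 0"
    unfolding \<gamma>_def gamma_eq[OF cphs deg] by (intro sum_nonneg mult_nonneg_nonneg trP_nonneg[OF cphs deg]) auto
  have \<gamma>le: "\<gamma> \<le> w\<^sup>2 / 4 * n"
  proof -
    have "\<gamma> = (\<Sum>p\<in>?S. (real_of_int p - c)\<^sup>2 * Re (trace (P p)))"
      unfolding \<gamma>_def gamma_eq[OF cphs deg] ..
    also have "\<dots> \<le> (\<Sum>p\<in>?S. w\<^sup>2 / 4 * Re (trace (P p)))"
    proof (intro sum_mono mult_right_mono trP_nonneg[OF cphs deg])
      fix p assume p: "p \<in> ?S"
      have "m \<le> real_of_int p" "real_of_int p \<le> MM"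
        using p finS[OF cphs] by (auto simp: m_def MM_def)
      then show "(real_of_int p - c)\<^sup>2 \<le> w\<^sup>2 / 4" unfolding c_def w by (rule sq_bound)
    qed
    also have "\<dots> = w\<^sup>2 / 4 * n"
      by (simp only: sum_distrib_left[symmetric] sum_trP[OF cphs deg] n_def)
    finally show ?thesis .
  qed
  have disc: "(-N)\<^sup>2 \<le> \<alpha> * \<gamma>"
    by (rule quad_disc[OF _ \<gamma>0]) (use quad[OF cphs deg] in \<open>simp add: \<alpha>_def N_def \<gamma>_def\<close>)
  have \<alpha>0: "\<alpha> \<ge> 0"
    using adj_pos[OF cphs, of "\<theta> H P u"] by (simp add: \<alpha>_def adj_theta[OF cphs deg])
  have "N\<^sup>2 \<le> \<alpha> * (w\<^sup>2 / 4 * n)"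
    using disc mult_left_mono[OF \<gamma>le \<alpha>0] by simp
  then have key: "4 / (w\<^sup>2 * n) * N\<^sup>2 \<le> \<alpha>"
    using w1 n by (simp add: field_simps)
  have lhs: "hodge_norm2 H P (u ** hodge_adj H P u - hodge_adj H P u ** u) = \<alpha>"
    by (simp add: hodge_norm2_def \<alpha>_def \<theta>_def[OF cphs deg, symmetric] adj_theta[OF cphs deg])
  have rN: "hodge_norm2 H P u = N" by (simp add: hodge_norm2_def N_def)
  show ?thesis unfolding lhs rN using key by (simp add: w_def n_def)
qed

end
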